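(* For all $\beta,c\ge0$ and all $N_1,N_2\in\mathbb N$, $$p_{N_1+N_2}(\beta,c)\ge\frac{N_1}{N_1+N_2}p_{N_1}(\beta,c)+\frac{N_2}{N_1+N_2}p_{N_2}(\beta,c).$$
   Context: Fix an integer $q\ge2$, $[q]=\{1,\dots,q\}$. For $\sigma\in[q]^N$ and a real $N\times N$ matrix $J$, $H_N(\sigma,J)=\sum_{i,j=1}^N J_{ij}\delta(\sigma_i,\sigma_j)$ ($\delta$ the Kronecker delta) and $Z_N(J)=\sum_{\sigma\in[q]^N}e^{-H_N(\sigma,J)}$. For $c\ge0$, $\mathbb P_{N,c}$ is the law of a random $N\times N$ matrix $J$ with independent entries $J_{ij}$ ($1\le i,j\le N$) each Poisson with mean $c/(2N)$, with expectation $\mathbb E_{N,c}$; $p_N(\beta,c)=\mathbb E_{N,c}[N^{-1}\ln Z_N(\beta J)]$. *)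

theory Defs
  imports "HOL-Probability.Probability"
begin

definition poisson_mean :: "real \<Rightarrow> nat pmf" where
  "poisson_mean lam = (if lam = 0 then return_pmf 0 else poisson_pmf lam)"

definition configs :: "nat \<Rightarrow> nat \<Rightarrow> (nat \<Rightarrow> nat) set" where
  "configs q N = PiE {1..N} (\<lambda>_. {1..q})"

definition potts_H :: "nat \<Rightarrow> (nat \<Rightarrow> nat) \<Rightarrow> (nat \<times> nat \<Rightarrow> real) \<Rightarrow> real" where
  "potts_H N \<sigma> J = (\<Sum>i\<in>{1..N}. \<Sum>j\<in>{1..N}. J (i, j) * (if \<sigma> i = \<sigma> j then 1 else 0))"

definition partition_Z :: "nat \<Rightarrow> nat \<Rightarrow> (nat \<times> nat \<Rightarrow> real) \<Rightarrow> real" where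
  "partition_Z q N J = (\<Sum>\<sigma>\<in>configs q N. exp (- potts_H N \<sigma> J))"

text \<open>Law P_{N,c}: independent Poisson(c/(2N)) entries J_ij, 1 \<le> i,j \<le> N
  (entries outside the index range are fixed to 0).\<close>
definition J_law :: "nat \<Rightarrow> real \<Rightarrow> (nat \<times> nat \<Rightarrow> nat) pmf" where
  "J_law N c = Pi_pmf ({1..N} \<times> {1..N}) 0 (\<lambda>_. poisson_mean (c / (2 * real N)))"

definition pressure :: "nat \<Rightarrow> nat \<Rightarrow> real \<Rightarrow> real \<Rightarrow> real" where
  "pressure q N \<beta> c = measure_pmf.expectation (J_law N c)
      (\<lambda>J. ln (partition_Z q N (\<lambda>ij. \<beta> * real (J ij))) / real N)"

end

theory Submission
  imports Defs "HOL-Analysis.Analysis"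
begin
no_notation Infinite_Sum.abs_summable_on (infixr \<open>abs'_summable'_on\<close> 46)


definition inc :: "('a \<Rightarrow> nat) \<Rightarrow> 'a \<Rightarrow> 'a \<Rightarrow> nat" where
  "inc G p = G(p := G p + 1)"

definition Fz :: "nat \<Rightarrow> nat \<Rightarrow> real \<Rightarrow> (nat \<times> nat \<Rightarrow> nat) \<Rightarrow> real" where
  "Fz q N \<beta> J = ln (partition_Z q N (\<lambda>ij. \<beta> * real (J ij)))"

definition dl :: "nat \<Rightarrow> nat \<Rightarrow> real" where
  "dl x y = (if x = y then 1 else 0)"

lemma potts_H_alt:
  "potts_H N \<sigma> J = (\<Sum>p\<in>{1..N}\<times>{1..N}. J p * dl (\<sigma> (fst p)) (\<sigma> (snd p)))"
  unfolding potts_H_def dl_def by (subst sum.cartesian_product) (simp add: case_prod_unfold)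

lemma H_inc:
  assumes "p \<in> {1..N}\<times>{1..N}"
  shows "potts_H N \<sigma> (\<lambda>ij. \<beta> * real (inc G p ij))
       = potts_H N \<sigma> (\<lambda>ij. \<beta> * real (G ij)) + \<beta> * dl (\<sigma> (fst p)) (\<sigma> (snd p))"
proof -
  have "(\<lambda>ij. \<beta> * real (inc G p ij) * dl (\<sigma> (fst ij)) (\<sigma> (snd ij)))
      = (\<lambda>ij. \<beta> * real (G ij) * dl (\<sigma> (fst ij)) (\<sigma> (snd ij))
           + (if ij = p then \<beta> * dl (\<sigma> (fst p)) (\<sigma> (snd p)) else 0))"
    by (auto simp: inc_def algebra_simps fun_eq_iff)
  then show ?thesis unfolding potts_H_alt
    using assms by (simp only: sum.distrib mult.assoc) simp
qed

lemma configs_ne: "q \<ge> 1 \<Longrightarrow> configs q N \<noteq> {}"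
  unfolding configs_def by (auto simp: PiE_eq_empty_iff)

lemma configs_finite: "finite (configs q N)"
  unfolding configs_def by (intro finite_PiE) auto

lemma Z_pos: "q \<ge> 1 \<Longrightarrow> partition_Z q N J > 0"
  unfolding partition_Z_def
  by (intro sum_pos configs_finite configs_ne) auto

definition Yk :: "nat \<Rightarrow> nat \<Rightarrow> real \<Rightarrow> (nat \<times> nat \<Rightarrow> nat) \<Rightarrow> nat \<Rightarrow> nat \<Rightarrow> real" where
  "Yk q N \<beta> G i j = (\<Sum>\<sigma>\<in>configs q N. exp (- potts_H N \<sigma> (\<lambda>ij. \<beta> * real (G ij))) * dl (\<sigma> i) (\<sigma> j))"

definition Xk :: "nat \<Rightarrow> nat \<Rightarrow> real \<Rightarrow> (nat \<times> nat \<Rightarrow> nat) \<Rightarrow> nat \<Rightarrow> nat \<Rightarrow> real" where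
  "Xk q N \<beta> G i j = Yk q N \<beta> G i j / partition_Z q N (\<lambda>ij. \<beta> * real (G ij))"

lemma dl_01: "dl x y = 0 \<or> dl x y = 1" by (simp add: dl_def)

lemma Yk_bounds: "0 \<le> Yk q N \<beta> G i j" "Yk q N \<beta> G i j \<le> partition_Z q N (\<lambda>ij. \<beta> * real (G ij))"
  unfolding Yk_def partition_Z_def
  by (auto intro!: sum_nonneg sum_mono simp: dl_def)

lemma Xk_bounds: assumes "q \<ge> 1" shows "0 \<le> Xk q N \<beta> G i j" "Xk q N \<beta> G i j \<le> 1"
  using Yk_bounds[of q N \<beta> G i j] Z_pos[OF assms, of N "\<lambda>ij. \<beta> * real (G ij)"]
  unfolding Xk_def by (auto simp: divide_le_eq_1)

lemma Z_inc:
  assumes "p \<in> {1..N}\<times>{1..N}"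
  shows "partition_Z q N (\<lambda>ij. \<beta> * real (inc G p ij))
       = partition_Z q N (\<lambda>ij. \<beta> * real (G ij)) - (1 - exp (-\<beta>)) * Yk q N \<beta> G (fst p) (snd p)"
proof -
  have "exp (- potts_H N \<sigma> (\<lambda>ij. \<beta> * real (inc G p ij)))
     = exp (- potts_H N \<sigma> (\<lambda>ij. \<beta> * real (G ij)))
       - (1 - exp (-\<beta>)) * (exp (- potts_H N \<sigma> (\<lambda>ij. \<beta> * real (G ij))) * dl (\<sigma> (fst p)) (\<sigma> (snd p)))" for \<sigma>
    unfolding H_inc[OF assms] by (auto simp: dl_def algebra_simps exp_diff exp_minus field_simps)
  then show ?thesis unfolding partition_Z_def Yk_def
    by (simp add: sum_subtractf sum_distrib_left)
qed

lemma Fz_inc: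
  assumes "p \<in> {1..N}\<times>{1..N}" "q \<ge> 1" "\<beta> \<ge> 0"
  shows "Fz q N \<beta> (inc G p) = Fz q N \<beta> G + ln (1 - (1 - exp (-\<beta>)) * Xk q N \<beta> G (fst p) (snd p))"
proof -
  let ?Z = "partition_Z q N (\<lambda>ij. \<beta> * real (G ij))"
  let ?a = "1 - exp (-\<beta>)"
  let ?x = "Xk q N \<beta> G (fst p) (snd p)"
  have Z: "?Z > 0" using Z_pos[OF assms(2)] .
  have a: "0 \<le> ?a" "?a < 1" using assms(3) by auto
  have x: "0 \<le> ?x" "?x \<le> 1" using Xk_bounds[OF assms(2)] by auto
  have "?a * ?x \<le> ?a" using a x by (simp add: mult_left_le)
  hence pos: "1 - ?a * ?x > 0" using a by linarith
  have "partition_Z q N (\<lambda>ij. \<beta> * real (inc G p ij)) = ?Z * (1 - ?a * ?x)"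
    unfolding Z_inc[OF assms(1)] Xk_def using Z by (simp add: field_simps)
  then show ?thesis unfolding Fz_def using Z pos by (simp add: ln_mult)
qed



inductive_set Kc :: "(nat \<Rightarrow> nat \<Rightarrow> real) set" where
  Keq: "(\<lambda>i j. dl (u i) (u j)) \<in> Kc"
| Kadd: "K1 \<in> Kc \<Longrightarrow> K2 \<in> Kc \<Longrightarrow> (\<lambda>i j. K1 i j + K2 i j) \<in> Kc"
| Kscale: "K \<in> Kc \<Longrightarrow> 0 \<le> c \<Longrightarrow> (\<lambda>i j. c * K i j) \<in> Kc"

lemma Kc_zero: "(\<lambda>i j. 0) \<in> Kc"
proof -
  have "(\<lambda>i j. 0 * dl ((\<lambda>_. 0) i) ((\<lambda>_. 0) j)) \<in> Kc" by (intro Kscale Keq) auto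
  thus ?thesis by simp
qed

lemma Kc_one: "(\<lambda>i j. 1) \<in> Kc"
proof -
  have "(\<lambda>i j. dl ((\<lambda>_. 0) i) ((\<lambda>_. 0) j)) \<in> Kc" by (rule Keq)
  thus ?thesis by (simp add: dl_def)
qed

lemma Kc_sum: "finite S \<Longrightarrow> (\<And>s. s \<in> S \<Longrightarrow> K s \<in> Kc) \<Longrightarrow> (\<lambda>i j. \<Sum>s\<in>S. K s i j) \<in> Kc"
proof (induction S rule: finite_induct)
  case empty thus ?case using Kc_zero by simp
next
  case (insert x F)
  have "(\<lambda>i j. K x i j + (\<Sum>s\<in>F. K s i j)) \<in> Kc"
    using insert by (intro Kadd) auto
  thus ?case using insert by simp
qed

lemma Kc_eq_mult: "K \<in> Kc \<Longrightarrow> (\<lambda>i j. dl (u i) (u j) * K i j) \<in> Kc"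
proof (induction rule: Kc.induct)
  case (Keq v)
  have "(\<lambda>i j. dl ((\<lambda>i. prod_encode (u i, v i)) i) ((\<lambda>i. prod_encode (u i, v i)) j)) \<in> Kc"
    by (rule Kc.Keq)
  moreover have "(\<lambda>i j. dl ((\<lambda>i. prod_encode (u i, v i)) i) ((\<lambda>i. prod_encode (u i, v i)) j))
     = (\<lambda>i j. dl (u i) (u j) * dl (v i) (v j))"
    by (auto simp: dl_def fun_eq_iff prod_encode_eq)
  ultimately show ?case by simp
next
  case (Kadd K1 K2)
  have "(\<lambda>i j. dl (u i) (u j) * K1 i j + dl (u i) (u j) * K2 i j) \<in> Kc"
    using Kadd by (intro Kc.Kadd)
  thus ?case by (simp add: algebra_simps)
next
  case (Kscale K c)
  have "(\<lambda>i j. c * (dl (u i) (u j) * K i j)) \<in> Kc"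
    using Kscale by (intro Kc.Kscale)
  thus ?case by (simp add: algebra_simps)
qed

lemma Kc_mult: "K1 \<in> Kc \<Longrightarrow> K2 \<in> Kc \<Longrightarrow> (\<lambda>i j. K1 i j * K2 i j) \<in> Kc"
proof (induction rule: Kc.induct)
  case (Keq u) thus ?case by (rule Kc_eq_mult)
next
  case (Kadd K1 K1')
  have "(\<lambda>i j. K1 i j * K2 i j + K1' i j * K2 i j) \<in> Kc"
    using Kadd by (intro Kc.Kadd)
  thus ?case by (simp add: algebra_simps)
next
  case (Kscale K c)
  have "(\<lambda>i j. c * (K i j * K2 i j)) \<in> Kc"
    using Kscale by (intro Kc.Kscale)
  thus ?case by (simp add: algebra_simps)
qed

lemma Kc_power: "K \<in> Kc \<Longrightarrow> (\<lambda>i j. K i j ^ n) \<in> Kc"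
proof (induction n)
  case 0 thus ?case using Kc_one by simp
next
  case (Suc n)
  have "(\<lambda>i j. K i j * K i j ^ n) \<in> Kc" using Suc by (intro Kc_mult) auto
  thus ?case by simp
qed

lemma Xk_Kc:
  assumes "q \<ge> 1"
  shows "Xk q N \<beta> G \<in> Kc"
proof -
  let ?Z = "partition_Z q N (\<lambda>ij. \<beta> * real (G ij))"
  have "(\<lambda>i j. \<Sum>\<sigma>\<in>configs q N. (exp (- potts_H N \<sigma> (\<lambda>ij. \<beta> * real (G ij))) / ?Z) * dl (\<sigma> i) (\<sigma> j)) \<in> Kc"
    using Z_pos[OF assms, of N "\<lambda>ij. \<beta> * real (G ij)"]
    by (intro Kc_sum configs_finite Kscale Keq) auto
  moreover have "(\<lambda>i j. \<Sum>\<sigma>\<in>configs q N. (exp (- potts_H N \<sigma> (\<lambda>ij. \<beta> * real (G ij))) / ?Z) * dl (\<sigma> i) (\<sigma> j))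
     = Xk q N \<beta> G"
    unfolding Xk_def Yk_def by (auto simp: fun_eq_iff sum_divide_distrib)
  ultimately show ?thesis by simp
qed



definition lamw :: "nat \<Rightarrow> nat \<Rightarrow> real \<Rightarrow> nat \<times> nat \<Rightarrow> real" where
  "lamw N1 N2 c p = c / (2 * real (N1 + N2))"

definition kapw :: "nat \<Rightarrow> nat \<Rightarrow> real \<Rightarrow> nat \<times> nat \<Rightarrow> real" where
  "kapw N1 N2 c p = (if fst p \<le> N1 \<and> snd p \<le> N1 then c / (2 * real N1)
      else if N1 < fst p \<and> N1 < snd p then c / (2 * real N2) else 0)"

lemma block_sum:
  "(\<Sum>p\<in>{1..N1+N2}\<times>{1..N1+N2}. kapw N1 N2 c p * K p)
   = c / (2 * real N1) * (\<Sum>i\<in>{1..N1}. \<Sum>j\<in>{1..N1}. K (i,j))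
   + c / (2 * real N2) * (\<Sum>i\<in>{N1+1..N1+N2}. \<Sum>j\<in>{N1+1..N1+N2}. K (i,j))"
proof -
  have split: "{1..N1+N2} = {1..N1} \<union> {N1+1..N1+N2}" by auto
  have dis: "{1..N1} \<inter> {N1+1..N1+N2} = {}" by auto
  let ?f = "\<lambda>i j. kapw N1 N2 c (i,j) * K (i,j)"
  have "(\<Sum>p\<in>{1..N1+N2}\<times>{1..N1+N2}. kapw N1 N2 c p * K p) = (\<Sum>i\<in>{1..N1+N2}. \<Sum>j\<in>{1..N1+N2}. ?f i j)"
    by (subst sum.cartesian_product) (simp add: case_prod_unfold)
  also have "\<dots> = (\<Sum>i\<in>{1..N1}. (\<Sum>j\<in>{1..N1}. ?f i j) + (\<Sum>j\<in>{N1+1..N1+N2}. ?f i j))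
                + (\<Sum>i\<in>{N1+1..N1+N2}. (\<Sum>j\<in>{1..N1}. ?f i j) + (\<Sum>j\<in>{N1+1..N1+N2}. ?f i j))"
    unfolding split by (simp add: sum.union_disjoint dis)
  also have "\<dots> = (\<Sum>i\<in>{1..N1}. (\<Sum>j\<in>{1..N1}. c / (2 * real N1) * K (i,j)))
                + (\<Sum>i\<in>{N1+1..N1+N2}. (\<Sum>j\<in>{N1+1..N1+N2}. c / (2 * real N2) * K (i,j)))"
    by (intro arg_cong2[where f="(+)"] sum.cong refl) (auto simp: kapw_def)
  finally show ?thesis by (simp add: sum_distrib_left)
qed

lemma sum_ind_card: "finite S \<Longrightarrow> (\<Sum>j\<in>S. if P j then 1 else 0) = real (card {j\<in>S. P j})"
  by (simp add: sum.If_cases Int_def)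

lemma sqsum:
  assumes "finite T" "S \<subseteq> T"
  shows "(\<Sum>i\<in>S. \<Sum>j\<in>S. dl (u i) (u j)) = (\<Sum>v\<in>u ` T. (real (card {i\<in>S. u i = v}))^2)"
proof -
  have fS: "finite S" using assms finite_subset by blast
  have "(\<Sum>j\<in>S. dl (u i) (u j)) = real (card {j\<in>S. u j = u i})" for i
    unfolding dl_def using sum_ind_card[OF fS, of "\<lambda>j. u j = u i"] by (simp add: eq_commute)
  hence "(\<Sum>i\<in>S. \<Sum>j\<in>S. dl (u i) (u j)) = (\<Sum>i\<in>S. real (card {j\<in>S. u j = u i}))" by simp
  also have "\<dots> = (\<Sum>v\<in>u ` T. \<Sum>i\<in>{i\<in>S. u i = v}. real (card {j\<in>S. u j = u i}))"
    by (rule sum.group[symmetric]) (use assms fS in auto)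
  also have "\<dots> = (\<Sum>v\<in>u ` T. \<Sum>i\<in>{i\<in>S. u i = v}. real (card {j\<in>S. u j = v}))"
    by (intro sum.cong) auto
  also have "\<dots> = (\<Sum>v\<in>u ` T. (real (card {i\<in>S. u i = v}))^2)"
    by (simp add: power2_eq_square)
  finally show ?thesis .
qed

lemma quad_ineq:
  fixes x y s t :: real
  assumes "x > 0" "y > 0"
  shows "(s + t)^2 / (x + y) \<le> s^2 / x + t^2 / y"
proof -
  have "s^2 / x + t^2 / y - (s + t)^2 / (x + y) = (y * s - x * t)^2 / (x * y * (x + y))"
    using assms by (simp add: field_simps power2_eq_square)
  also have "\<dots> \<ge> 0" using assms by simp
  finally show ?thesis by simp
qed

lemma good_eq:
  assumes "N1 \<ge> 1" "N2 \<ge> 1" "c \<ge> 0"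
  shows "0 \<le> (\<Sum>p\<in>{1..N1+N2}\<times>{1..N1+N2}. (kapw N1 N2 c p - lamw N1 N2 c p) * dl (u (fst p)) (u (snd p)))"
proof -
  let ?A = "{1..N1+N2}" and ?B1 = "{1..N1}" and ?B2 = "{N1+1..N1+N2}"
  let ?V = "u ` ?A"
  define s1 where "s1 v = real (card {i\<in>?B1. u i = v})" for v
  define s2 where "s2 v = real (card {i\<in>?B2. u i = v})" for v
  have sA: "real (card {i\<in>?A. u i = v}) = s1 v + s2 v" for v
  proof -
    have "{i\<in>?A. u i = v} = {i\<in>?B1. u i = v} \<union> {i\<in>?B2. u i = v}" by auto
    moreover have "{i\<in>?B1. u i = v} \<inter> {i\<in>?B2. u i = v} = {}" by auto
    ultimately show ?thesis unfolding s1_def s2_def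
      by (simp add: card_Un_disjoint)
  qed
  have L: "(\<Sum>p\<in>?A\<times>?A. lamw N1 N2 c p * dl (u (fst p)) (u (snd p)))
       = c / (2 * real (N1+N2)) * (\<Sum>v\<in>?V. (s1 v + s2 v)^2)"
  proof -
    have "(\<Sum>p\<in>?A\<times>?A. lamw N1 N2 c p * dl (u (fst p)) (u (snd p)))
        = c / (2 * real (N1+N2)) * (\<Sum>i\<in>?A. \<Sum>j\<in>?A. dl (u i) (u j))"
      by (simp add: lamw_def sum.cartesian_product case_prod_unfold sum_distrib_left)
    also have "\<dots> = c / (2 * real (N1+N2)) * (\<Sum>v\<in>?V. (s1 v + s2 v)^2)"
      using sqsum[of ?A ?A u] sA by simp
    finally show ?thesis .
  qed
  have K: "(\<Sum>p\<in>?A\<times>?A. kapw N1 N2 c p * dl (u (fst p)) (u (snd p)))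
       = c / (2 * real N1) * (\<Sum>v\<in>?V. (s1 v)^2) + c / (2 * real N2) * (\<Sum>v\<in>?V. (s2 v)^2)"
    using block_sum[of N1 N2 c "\<lambda>p. dl (u (fst p)) (u (snd p))"]
      sqsum[of ?A ?B1 u] sqsum[of ?A ?B2 u] unfolding s1_def s2_def by simp
  have trm: "c / (2 * real (N1+N2)) * (s1 v + s2 v)^2 \<le> c / (2 * real N1) * (s1 v)^2 + c / (2 * real N2) * (s2 v)^2" for v
  proof -
    have "(s1 v + s2 v)^2 / (real N1 + real N2) \<le> (s1 v)^2 / real N1 + (s2 v)^2 / real N2"
      using assms by (intro quad_ineq) auto
    hence F1: "c / 2 * ((s1 v + s2 v)^2 / (real N1 + real N2)) \<le> c / 2 * ((s1 v)^2 / real N1 + (s2 v)^2 / real N2)"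
      using assms by (intro mult_left_mono) auto
    have E1: "c / (2 * real (N1+N2)) * (s1 v + s2 v)^2 = c / 2 * ((s1 v + s2 v)^2 / (real N1 + real N2))"
      by simp
    have E2: "c / (2 * real N1) * (s1 v)^2 + c / (2 * real N2) * (s2 v)^2 = c / 2 * ((s1 v)^2 / real N1 + (s2 v)^2 / real N2)"
      by (simp add: algebra_simps)
    show ?thesis unfolding E1 E2 by (rule F1)
  qed
  have "(\<Sum>v\<in>?V. c / (2 * real (N1+N2)) * (s1 v + s2 v)^2) \<le> (\<Sum>v\<in>?V. c / (2 * real N1) * (s1 v)^2 + c / (2 * real N2) * (s2 v)^2)"
    by (intro sum_mono trm)
  thus ?thesis
    unfolding left_diff_distrib sum_subtractf L K
    by (simp add: sum_distrib_left sum.distrib)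
qed



lemma good_Kc:
  assumes "K \<in> Kc" "N1 \<ge> 1" "N2 \<ge> 1" "c \<ge> 0"
  shows "0 \<le> (\<Sum>p\<in>{1..N1+N2}\<times>{1..N1+N2}. (kapw N1 N2 c p - lamw N1 N2 c p) * K (fst p) (snd p))"
  using assms(1)
proof (induction rule: Kc.induct)
  case (Keq u) thus ?case using good_eq[OF assms(2-4)] by simp
next
  case (Kadd K1 K2)
  let ?w = "\<lambda>p. kapw N1 N2 c p - lamw N1 N2 c p"
  have "(\<Sum>p\<in>{1..N1+N2}\<times>{1..N1+N2}. ?w p * (K1 (fst p) (snd p) + K2 (fst p) (snd p)))
      = (\<Sum>p\<in>{1..N1+N2}\<times>{1..N1+N2}. ?w p * K1 (fst p) (snd p)) + (\<Sum>p\<in>{1..N1+N2}\<times>{1..N1+N2}. ?w p * K2 (fst p) (snd p))"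
    by (simp only: distrib_left sum.distrib)
  thus ?case using Kadd.IH by linarith
next
  case (Kscale K c')
  have "(\<Sum>p\<in>{1..N1+N2}\<times>{1..N1+N2}. (kapw N1 N2 c p - lamw N1 N2 c p) * (c' * K (fst p) (snd p)))
      = c' * (\<Sum>p\<in>{1..N1+N2}\<times>{1..N1+N2}. (kapw N1 N2 c p - lamw N1 N2 c p) * K (fst p) (snd p))"
    by (simp add: sum_distrib_left algebra_simps)
  thus ?case using Kscale by simp
qed

lemma sum_kap: "N1 \<ge> 1 \<Longrightarrow> N2 \<ge> 1 \<Longrightarrow>
   (\<Sum>p\<in>{1..N1+N2}\<times>{1..N1+N2}. kapw N1 N2 c p) = (\<Sum>p\<in>{1..N1+N2}\<times>{1..N1+N2}. lamw N1 N2 c p)"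
  using block_sum[of N1 N2 c "\<lambda>_. 1"]
  by (simp add: lamw_def power2_eq_square field_simps)

lemma ln_sums: "0 \<le> y \<Longrightarrow> y < 1 \<Longrightarrow> (\<lambda>n. y ^ n / real n) sums (- ln (1 - y))"
  using sums_minus[OF ln_series'[of "-y"]] by simp

lemma edge_ineq:
  assumes "q \<ge> 1" "\<beta> \<ge> 0" "N1 \<ge> 1" "N2 \<ge> 1" "c \<ge> 0"
  shows "(\<Sum>p\<in>{1..N1+N2}\<times>{1..N1+N2}. kapw N1 N2 c p * Fz q (N1+N2) \<beta> (inc G p))
       \<le> (\<Sum>p\<in>{1..N1+N2}\<times>{1..N1+N2}. lamw N1 N2 c p * Fz q (N1+N2) \<beta> (inc G p))"
proof -
  let ?P = "{1..N1+N2}\<times>{1..N1+N2}"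
  let ?a = "1 - exp (-\<beta>)"
  let ?X = "Xk q (N1+N2) \<beta> G"
  let ?w = "\<lambda>p. kapw N1 N2 c p - lamw N1 N2 c p"
  have a: "0 \<le> ?a" "?a < 1" using assms(2) by auto
  have ax: "0 \<le> ?a * ?X i j" "?a * ?X i j < 1" for i j
  proof -
    have x: "0 \<le> ?X i j" "?X i j \<le> 1" using Xk_bounds[OF assms(1)] by auto
    show "0 \<le> ?a * ?X i j" using a x by simp
    have "?a * ?X i j \<le> ?a" using a x by (simp add: mult_left_le)
    thus "?a * ?X i j < 1" using a by linarith
  qed
  have S: "(\<lambda>n. \<Sum>p\<in>?P. ?w p * ((?a * ?X (fst p) (snd p)) ^ n / real n))
      sums (\<Sum>p\<in>?P. ?w p * (- ln (1 - ?a * ?X (fst p) (snd p))))"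
    by (intro sums_sum sums_mult ln_sums ax)
  have T: "0 \<le> (\<Sum>p\<in>?P. ?w p * ((?a * ?X (fst p) (snd p)) ^ n / real n))" for n
  proof -
    have "(\<Sum>p\<in>?P. ?w p * ((?a * ?X (fst p) (snd p)) ^ n / real n))
        = (?a ^ n / real n) * (\<Sum>p\<in>?P. ?w p * (?X (fst p) (snd p)) ^ n)"
      unfolding sum_distrib_left by (rule sum.cong[OF refl]) (simp add: power_mult_distrib mult_ac)
    also have "\<dots> \<ge> 0"
      using good_Kc[OF Kc_power[OF Xk_Kc[OF assms(1)], where n=n] assms(3-5)] a
      by (intro mult_nonneg_nonneg) auto
    finally show ?thesis .
  qed
  have pos: "0 \<le> (\<Sum>p\<in>?P. ?w p * (- ln (1 - ?a * ?X (fst p) (snd p))))"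
    using sums_le[OF T sums_zero S] by simp
  have F: "Fz q (N1+N2) \<beta> (inc G p) = Fz q (N1+N2) \<beta> G + ln (1 - ?a * ?X (fst p) (snd p))" if "p \<in> ?P" for p
    using Fz_inc[OF that assms(1,2)] by simp
  have "(\<Sum>p\<in>?P. lamw N1 N2 c p * Fz q (N1+N2) \<beta> (inc G p)) - (\<Sum>p\<in>?P. kapw N1 N2 c p * Fz q (N1+N2) \<beta> (inc G p))
     = (\<Sum>p\<in>?P. lamw N1 N2 c p * (Fz q (N1+N2) \<beta> G + ln (1 - ?a * ?X (fst p) (snd p))))
       - (\<Sum>p\<in>?P. kapw N1 N2 c p * (Fz q (N1+N2) \<beta> G + ln (1 - ?a * ?X (fst p) (snd p))))"
    using F by simp
  also have "\<dots> = ((\<Sum>p\<in>?P. lamw N1 N2 c p) - (\<Sum>p\<in>?P. kapw N1 N2 c p)) * Fz q (N1+N2) \<beta> G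
       + (\<Sum>p\<in>?P. ?w p * (- ln (1 - ?a * ?X (fst p) (snd p))))"
    by (simp add: algebra_simps sum.distrib sum_subtractf sum_distrib_left sum_distrib_right)
  also have "\<dots> \<ge> 0" using pos sum_kap[OF assms(3,4), of c] by simp
  finally show ?thesis by simp
qed



fun Sw :: "('a \<Rightarrow> real) \<Rightarrow> 'a set \<Rightarrow> nat \<Rightarrow> (('a \<Rightarrow> nat) \<Rightarrow> real) \<Rightarrow> ('a \<Rightarrow> nat) \<Rightarrow> real" where
  "Sw w P 0 f G = f G"
| "Sw w P (Suc M) f G = (\<Sum>p\<in>P. w p * Sw w P M f (inc G p))"

lemma inc_comm: "inc (inc G p) r = inc (inc G r) p"
  by (auto simp: inc_def fun_eq_iff)

lemma Sw_swap:
  "(\<Sum>p\<in>P. v p * Sw w P M f (inc G p)) = Sw w P M (\<lambda>G'. \<Sum>p\<in>P. v p * f (inc G' p)) G"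
proof (induction M arbitrary: G)
  case 0 thus ?case by simp
next
  case (Suc M)
  have "(\<Sum>p\<in>P. v p * Sw w P (Suc M) f (inc G p))
      = (\<Sum>p\<in>P. \<Sum>r\<in>P. w r * (v p * Sw w P M f (inc (inc G r) p)))"
    by (simp add: sum_distrib_left inc_comm algebra_simps)
  also have "\<dots> = (\<Sum>r\<in>P. w r * (\<Sum>p\<in>P. v p * Sw w P M f (inc (inc G r) p)))"
    by (subst sum.swap) (simp add: sum_distrib_left)
  also have "\<dots> = Sw w P (Suc M) (\<lambda>G'. \<Sum>p\<in>P. v p * f (inc G' p)) G"
    by (simp add: Suc.IH)
  finally show ?case .
qed

lemma Sw_mono:
  assumes "\<And>G. f G \<le> g G" "\<And>p. p \<in> P \<Longrightarrow> w p \<ge> 0"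
  shows "Sw w P M f G \<le> Sw w P M g G"
proof (induction M arbitrary: G)
  case 0 thus ?case using assms by simp
next
  case (Suc M) thus ?case using assms by (auto intro!: sum_mono mult_left_mono)
qed

lemma Sw_hybrid:
  assumes "\<And>G. (\<Sum>p\<in>P. k p * F (inc G p)) \<le> (\<Sum>p\<in>P. l p * F (inc G p))"
    "\<And>p. p \<in> P \<Longrightarrow> k p \<ge> 0" "\<And>p. p \<in> P \<Longrightarrow> l p \<ge> 0"
  shows "Sw k P M F G \<le> Sw l P M F G"
proof (induction M arbitrary: G)
  case 0 thus ?case by simp
next
  case (Suc M)
  have "Sw k P (Suc M) F G = Sw k P M (\<lambda>G'. \<Sum>p\<in>P. k p * F (inc G' p)) G"
    by (simp add: Sw_swap)
  also have "\<dots> \<le> Sw k P M (\<lambda>G'. \<Sum>p\<in>P. l p * F (inc G' p)) G"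
    by (intro Sw_mono assms)
  also have "\<dots> = (\<Sum>p\<in>P. l p * Sw k P M F (inc G p))"
    by (simp add: Sw_swap)
  also have "\<dots> \<le> (\<Sum>p\<in>P. l p * Sw l P M F (inc G p))"
    using Suc assms by (auto intro!: sum_mono mult_left_mono)
  also have "\<dots> = Sw l P (Suc M) F G" by simp
  finally show ?case .
qed



definition Cset :: "'a set \<Rightarrow> nat \<Rightarrow> ('a \<Rightarrow> nat) set" where
  "Cset P M = {n. (\<forall>p. p \<notin> P \<longrightarrow> n p = 0) \<and> (\<Sum>p\<in>P. n p) = M}"

definition rho :: "'a set \<Rightarrow> ('a \<Rightarrow> real) \<Rightarrow> ('a \<Rightarrow> nat) \<Rightarrow> real" where
  "rho P w n = (\<Prod>q\<in>P. w q ^ n q / fact (n q))"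

lemma Cset_finite:
  assumes "finite P" shows "finite (Cset P M)"
proof -
  have "Cset P M \<subseteq> {n. \<forall>x. (x \<in> P \<longrightarrow> n x \<in> {..M}) \<and> (x \<notin> P \<longrightarrow> n x = 0)}"
    unfolding Cset_def using assms by (auto intro: member_le_sum[where f = "\<lambda>x. x", simplified] simp: member_le_sum)
  moreover have "finite {n. \<forall>x. (x \<in> P \<longrightarrow> n x \<in> {..M}) \<and> (x \<notin> P \<longrightarrow> n x = 0)}"
    by (intro finite_set_of_finite_funs assms) auto
  ultimately show ?thesis by (rule finite_subset)
qed

lemma sum_inc: "finite P \<Longrightarrow> p \<in> P \<Longrightarrow> (\<Sum>q\<in>P. inc n p q) = Suc (\<Sum>q\<in>P. n q)"
proof -
  assume a: "finite P" "p \<in> P"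
  have "(\<Sum>q\<in>P. inc n p q) = (\<Sum>q\<in>P. n q + (if q = p then 1 else 0))"
    by (intro sum.cong) (auto simp: inc_def)
  thus ?thesis using a by (simp add: sum.distrib)
qed

lemma rho_inc:
  assumes "finite P" "p \<in> P"
  shows "real (n p + 1) * rho P w (inc n p) = w p * rho P w n"
proof -
  have A: "rho P w (inc n p) = (w p ^ (n p + 1) / fact (n p + 1)) * (\<Prod>q\<in>P-{p}. w q ^ n q / fact (n q))"
    unfolding rho_def using assms
    by (subst prod.remove[of P p]) (auto simp: inc_def intro!: prod.cong)
  have B: "rho P w n = (w p ^ n p / fact (n p)) * (\<Prod>q\<in>P-{p}. w q ^ n q / fact (n q))"
    unfolding rho_def using assms by (subst prod.remove[of P p]) auto
  have aux: "real (k+1) * (x ^ (k+1) / fact (k+1)) = x * (x ^ k / (fact k::real))" for k x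
  proof -
    have "fact (k+1) = real (k+1) * (fact k :: real)" by (simp add: fact_Suc)
    hence "real (k+1) * (x ^ (k+1) / fact (k+1)) = x ^ (k+1) / fact k"
      by (simp del: of_nat_Suc)
    thus ?thesis by simp
  qed
  show ?thesis unfolding A B mult.assoc[symmetric] aux[of "n p" "w p"] by simp
qed

lemma inc_inj: "inc n p = inc m p \<Longrightarrow> n = m"
  unfolding inc_def by (auto simp: fun_eq_iff split: if_splits)

lemma Cset_inc_bij:
  assumes "finite P" "p \<in> P"
  shows "bij_betw (\<lambda>n. inc n p) (Cset P M) {n'\<in>Cset P (Suc M). 1 \<le> n' p}"
proof (rule bij_betw_byWitness[where f' = "\<lambda>n'. n'(p := n' p - 1)"])
  show "\<forall>a\<in>Cset P M. (inc a p)(p := inc a p p - 1) = a" by (auto simp: inc_def)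
  show "\<forall>a'\<in>{n' \<in> Cset P (Suc M). 1 \<le> n' p}. inc (a'(p := a' p - 1)) p = a'"
    by (auto simp: inc_def fun_eq_iff)
  show "(\<lambda>n. inc n p) ` Cset P M \<subseteq> {n' \<in> Cset P (Suc M). 1 \<le> n' p}"
    using assms by (auto simp: Cset_def sum_inc) (auto simp: inc_def)
  show "(\<lambda>n'. n'(p := n' p - 1)) ` {n' \<in> Cset P (Suc M). 1 \<le> n' p} \<subseteq> Cset P M"
  proof
    fix m assume "m \<in> (\<lambda>n'. n'(p := n' p - 1)) ` {n' \<in> Cset P (Suc M). 1 \<le> n' p}"
    then obtain n' where n': "n' \<in> Cset P (Suc M)" "1 \<le> n' p" and m: "m = n'(p := n' p - 1)" by auto
    have "inc m p = n'" using n' m by (auto simp: inc_def fun_eq_iff)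
    hence "Suc (\<Sum>q\<in>P. m q) = Suc M" using sum_inc[OF assms, of m] n' by (simp add: Cset_def)
    thus "m \<in> Cset P M" using n' m assms by (auto simp: Cset_def)
  qed
qed

lemma Sw_multinom:
  assumes "finite P"
  shows "Sw w P M f G = fact M * (\<Sum>n\<in>Cset P M. rho P w n * f (\<lambda>x. G x + n x))"
proof (induction M arbitrary: G)
  case 0
  have C0: "Cset P 0 = {\<lambda>_. 0}"
    using assms by (auto simp: Cset_def fun_eq_iff)
  show ?case by (simp add: C0 rho_def)
next
  case (Suc M)
  have inner: "w p * (\<Sum>n\<in>Cset P M. rho P w n * f (\<lambda>x. inc G p x + n x))
      = (\<Sum>n'\<in>Cset P (Suc M). real (n' p) * rho P w n' * f (\<lambda>x. G x + n' x))" if p: "p \<in> P" for p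
  proof -
    have "w p * (\<Sum>n\<in>Cset P M. rho P w n * f (\<lambda>x. inc G p x + n x))
        = (\<Sum>n\<in>Cset P M. real (inc n p p) * rho P w (inc n p) * f (\<lambda>x. G x + inc n p x))"
      unfolding sum_distrib_left
    proof (intro sum.cong refl)
      fix n assume "n \<in> Cset P M"
      have e: "(\<lambda>x. inc G p x + n x) = (\<lambda>x. G x + inc n p x)" by (auto simp: inc_def)
      show "w p * (rho P w n * f (\<lambda>x. inc G p x + n x)) = real (inc n p p) * rho P w (inc n p) * f (\<lambda>x. G x + inc n p x)"
        unfolding e using rho_inc[OF assms p, of n w] by (simp add: inc_def)
    qed
    also have "\<dots> = (\<Sum>n'\<in>{n'\<in>Cset P (Suc M). 1 \<le> n' p}. real (n' p) * rho P w n' * f (\<lambda>x. G x + n' x))"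
      by (rule sum.reindex_bij_betw[OF Cset_inc_bij[OF assms p]])
    also have "\<dots> = (\<Sum>n'\<in>Cset P (Suc M). real (n' p) * rho P w n' * f (\<lambda>x. G x + n' x))"
      by (intro sum.mono_neutral_left Cset_finite assms) auto
    finally show ?thesis .
  qed
  have "Sw w P (Suc M) f G = fact M * (\<Sum>p\<in>P. w p * (\<Sum>n\<in>Cset P M. rho P w n * f (\<lambda>x. inc G p x + n x)))"
    by (simp add: Suc.IH sum_distrib_left algebra_simps)
  also have "\<dots> = fact M * (\<Sum>p\<in>P. \<Sum>n'\<in>Cset P (Suc M). real (n' p) * rho P w n' * f (\<lambda>x. G x + n' x))"
    using inner by simp
  also have "\<dots> = fact M * (\<Sum>n'\<in>Cset P (Suc M). real (\<Sum>p\<in>P. n' p) * (rho P w n' * f (\<lambda>x. G x + n' x)))"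
    by (subst sum.swap) (simp add: of_nat_sum sum_distrib_right mult.assoc)
  also have "\<dots> = fact M * (\<Sum>n'\<in>Cset P (Suc M). real (Suc M) * (rho P w n' * f (\<lambda>x. G x + n' x)))"
    by (intro arg_cong2[where f="(*)"] sum.cong refl) (auto simp: Cset_def)
  also have "\<dots> = fact (Suc M) * (\<Sum>n\<in>Cset P (Suc M). rho P w n * f (\<lambda>x. G x + n x))"
    by (simp add: sum_distrib_left algebra_simps)
  finally show ?case .
qed

lemma Sw_const:
  "Sw w P M (\<lambda>_. 1) G = (\<Sum>p\<in>P. w p) ^ M"
  by (induction M arbitrary: G) (simp_all add: sum_distrib_right)




lemma pmf_poisson_mean: "w \<ge> 0 \<Longrightarrow> pmf (poisson_mean w) k = w ^ k / fact k * exp (- w)"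
  by (cases "w = 0") (auto simp: poisson_mean_def indicator_def)

definition Dom :: "'a set \<Rightarrow> ('a \<Rightarrow> nat) set" where
  "Dom P = {n. \<forall>x. x \<notin> P \<longrightarrow> n x = 0}"

lemma pmf_PiP:
  assumes "finite P" "\<And>p. p \<in> P \<Longrightarrow> w p \<ge> 0"
  shows "pmf (Pi_pmf P 0 (\<lambda>p. poisson_mean (w p))) n
       = (if n \<in> Dom P then exp (- (\<Sum>p\<in>P. w p)) * rho P w n else 0)"
proof -
  have "(\<Prod>x\<in>P. pmf (poisson_mean (w x)) (n x)) = (\<Prod>x\<in>P. w x ^ n x / fact (n x) * exp (- w x))"
    using assms by (intro prod.cong) (auto simp: pmf_poisson_mean)
  also have "\<dots> = exp (- (\<Sum>p\<in>P. w p)) * rho P w n"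
    unfolding rho_def prod.distrib using assms by (simp add: exp_sum[symmetric] sum_negf)
  finally show ?thesis using assms by (auto simp: pmf_Pi Dom_def)
qed

lemma Dom_bij: "bij_betw snd (Sigma UNIV (Cset P)) (Dom P)"
  unfolding bij_betw_def inj_on_def by (auto simp: Cset_def Dom_def image_iff)

lemma poisson_expect:
  fixes f :: "('a \<Rightarrow> nat) \<Rightarrow> real"
  assumes P: "finite P" and w: "\<And>p. p \<in> P \<Longrightarrow> w p \<ge> 0" and AB: "A \<ge> 0" "B \<ge> 0"
    and bound: "\<And>n. n \<in> Dom P \<Longrightarrow> \<bar>f n\<bar> \<le> A + B * real (\<Sum>p\<in>P. n p)"
  shows "integrable (measure_pmf (Pi_pmf P 0 (\<lambda>p. poisson_mean (w p)))) f"
    and "(\<lambda>M. exp (- (\<Sum>p\<in>P. w p)) / fact M * Sw w P M f (\<lambda>_. 0))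
           sums measure_pmf.expectation (Pi_pmf P 0 (\<lambda>p. poisson_mean (w p))) f"
proof -
  define D where "D = Pi_pmf P 0 (\<lambda>p. poisson_mean (w p))"
  define W where "W = (\<Sum>p\<in>P. w p)"
  define g where "g n = pmf D n * f n" for n
  have W0: "W \<ge> 0" unfolding W_def using w by (simp add: sum_nonneg)
  have pmfD: "pmf D n = (if n \<in> Dom P then exp (- W) * rho P w n else 0)" for n
    unfolding D_def W_def by (rule pmf_PiP[OF P w])
  have rho0: "rho P w n \<ge> 0" for n unfolding rho_def using w by (intro prod_nonneg) auto
  have fin: "finite (Cset P M)" for M by (rule Cset_finite[OF P])
  have cnt: "countable (Cset P M)" for M by (rule countable_finite[OF fin])
  have CDom: "Cset P M \<subseteq> Dom P" for M by (auto simp: Cset_def Dom_def)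
  have inner: "(\<Sum>n\<in>Cset P M. g n) = exp (- W) / fact M * Sw w P M f (\<lambda>_. 0)" for M
  proof -
    have "(\<Sum>n\<in>Cset P M. g n) = exp (- W) * (\<Sum>n\<in>Cset P M. rho P w n * f n)"
      unfolding g_def pmfD sum_distrib_left using CDom by (intro sum.cong) auto
    also have "\<dots> = exp (- W) / fact M * Sw w P M f (\<lambda>_. 0)"
      unfolding Sw_multinom[OF P] by simp
    finally show ?thesis .
  qed
  have innerabs: "(\<Sum>n\<in>Cset P M. \<bar>g n\<bar>) \<le> exp (- W) * (A + B) * ((2 * W) ^ M / fact M)" for M
  proof -
    have "(\<Sum>n\<in>Cset P M. \<bar>g n\<bar>) \<le> (\<Sum>n\<in>Cset P M. exp (- W) * rho P w n * (A + B * real M))"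
    proof (intro sum_mono)
      fix n assume n: "n \<in> Cset P M"
      have "n \<in> Dom P" using n CDom by blast
      hence "\<bar>f n\<bar> \<le> A + B * real (\<Sum>p\<in>P. n p)" by (rule bound)
      moreover have "(\<Sum>p\<in>P. n p) = M" using n by (simp add: Cset_def)
      ultimately have "\<bar>f n\<bar> \<le> A + B * real M" by simp
      thus "\<bar>g n\<bar> \<le> exp (- W) * rho P w n * (A + B * real M)"
        using n CDom rho0[of n] unfolding g_def pmfD
        by (auto simp: abs_mult intro!: mult_left_mono)
    qed
    also have "\<dots> = (\<Sum>n\<in>Cset P M. (exp (- W) * (A + B * real M)) * rho P w n)"
      by (intro sum.cong refl) (simp only: mult_ac)
    also have "\<dots> = exp (- W) * (A + B * real M) * (\<Sum>n\<in>Cset P M. rho P w n)"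
      by (simp only: sum_distrib_left)
    also have "(\<Sum>n\<in>Cset P M. rho P w n) = W ^ M / fact M"
      using Sw_multinom[OF P, of w M "\<lambda>_. 1" "\<lambda>_. 0"] Sw_const[of w P M "\<lambda>_. 0"]
      unfolding W_def by (simp add: field_simps)
    also have "exp (- W) * (A + B * real M) * (W ^ M / fact M) \<le> exp (- W) * ((A + B) * 2 ^ M) * (W ^ M / fact M)"
    proof -
      have "real M \<le> 2 ^ M"
        using less_exp[of M] by (simp add: of_nat_less_iff[symmetric])
      hence "B * real M \<le> B * 2 ^ M" using AB by (intro mult_left_mono) auto
      moreover have "A * 1 \<le> A * 2 ^ M" using AB by (intro mult_left_mono) auto
      ultimately have "A + B * real M \<le> (A + B) * 2 ^ M" by (simp add: distrib_right)
      thus ?thesis using W0 by (intro mult_right_mono mult_left_mono) auto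
    qed
    also have "\<dots> = exp (- W) * (A + B) * ((2 * W) ^ M / fact M)"
      by (simp add: power_mult_distrib)
    finally show ?thesis .
  qed
  have sumexp: "summable (\<lambda>M. exp (- W) * (A + B) * ((2 * W) ^ M / fact M))"
    using summable_exp[of "2*W"] by (intro summable_mult) (simp add: field_simps)
  have outer: "(\<lambda>M. infsetsum (\<lambda>n. norm (g n)) (Cset P M)) abs_summable_on UNIV"
    unfolding abs_summable_on_nat_iff'
  proof (rule summable_comparison_test[OF _ sumexp], intro exI allI impI)
    fix M :: nat
    show "norm (norm (infsetsum (\<lambda>n. norm (g n)) (Cset P M))) \<le> exp (- W) * (A + B) * ((2 * W) ^ M / fact M)"
      using innerabs[of M] fin[of M] by (simp add: sum_nonneg)
  qed
  have absSig: "(\<lambda>z. g (snd z)) abs_summable_on Sigma UNIV (Cset P)"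
    by (subst abs_summable_on_Sigma_iff) (use outer fin cnt in auto)
  have absDom: "g abs_summable_on Dom P"
    using absSig abs_summable_on_reindex_bij_betw[OF Dom_bij, of g] by simp
  have absU: "g abs_summable_on UNIV"
    by (rule iffD1[OF abs_summable_on_cong_neutral absDom]) (auto simp: g_def pmfD)
  show "integrable (measure_pmf D) f"
  proof -
    have "integrable (count_space UNIV) (\<lambda>x. pmf D x *\<^sub>R f x)"
      using absU unfolding abs_summable_on_def g_def by simp
    thus ?thesis unfolding measure_pmf_eq_density
      by (subst integrable_density) auto
  qed
  have "measure_pmf.expectation D f = infsetsum g UNIV"
    unfolding g_def by (rule pmf_expectation_eq_infsetsum)
  also have "\<dots> = infsetsum g (Dom P)"
    by (intro infsetsum_cong_neutral) (auto simp: g_def pmfD)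
  also have "\<dots> = infsetsum (\<lambda>z. g (snd z)) (Sigma UNIV (Cset P))"
    by (rule infsetsum_reindex_bij_betw[OF Dom_bij, symmetric])
  also have "\<dots> = infsetsum (\<lambda>M. infsetsum (\<lambda>n. g n) (Cset P M)) UNIV"
    by (subst infsetsum_Sigma) (use absSig fin cnt in auto)
  also have "\<dots> = infsetsum (\<lambda>M. exp (- W) / fact M * Sw w P M f (\<lambda>_. 0)) UNIV"
    using fin inner by simp
  finally have EQ: "measure_pmf.expectation D f = infsetsum (\<lambda>M. exp (- W) / fact M * Sw w P M f (\<lambda>_. 0)) UNIV" .
  have absM: "(\<lambda>M. exp (- W) / fact M * Sw w P M f (\<lambda>_. 0)) abs_summable_on UNIV"
  proof -
    have "(\<lambda>M. infsetsum (\<lambda>n. g n) (Cset P M)) abs_summable_on UNIV"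
      by (rule abs_summable_on_Sigma_project1'[where f="\<lambda>M n. g n"]) (use absSig fin cnt in \<open>auto simp: case_prod_unfold\<close>)
    thus ?thesis using fin inner by simp
  qed
  show "(\<lambda>M. exp (- W) / fact M * Sw w P M f (\<lambda>_. 0)) sums measure_pmf.expectation D f"
    unfolding EQ by (rule sums_infsetsum_nat'[OF absM])
qed



lemma potts_H_nonneg: "(\<And>p. J p \<ge> 0) \<Longrightarrow> potts_H N \<sigma> J \<ge> 0"
  unfolding potts_H_alt by (intro sum_nonneg mult_nonneg_nonneg) (auto simp: dl_def)

lemma configs_card: "card (configs q N) = q ^ N"
  unfolding configs_def by (simp add: card_PiE)

lemma Fz_bound:
  assumes "q \<ge> 1" "\<beta> \<ge> 0"
  shows "\<bar>Fz q N \<beta> n\<bar> \<le> real N * ln (real q) + \<beta> * real (\<Sum>p\<in>{1..N}\<times>{1..N}. n p)"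
proof -
  let ?J = "\<lambda>ij. \<beta> * real (n ij)"
  let ?Z = "partition_Z q N ?J"
  have Z: "?Z > 0" using Z_pos[OF assms(1)] .
  have up: "?Z \<le> real q ^ N"
  proof -
    have "?Z \<le> (\<Sum>\<sigma>\<in>configs q N. 1)"
      unfolding partition_Z_def using potts_H_nonneg[of ?J] assms
      by (intro sum_mono) auto
    thus ?thesis by (simp add: configs_card)
  qed
  define \<sigma>0 where "\<sigma>0 = restrict (\<lambda>_. 1::nat) {1..N}"
  have s0: "\<sigma>0 \<in> configs q N" using assms unfolding \<sigma>0_def configs_def by auto
  have H0: "potts_H N \<sigma>0 ?J \<le> \<beta> * real (\<Sum>p\<in>{1..N}\<times>{1..N}. n p)"
    unfolding potts_H_alt of_nat_sum sum_distrib_left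
    using assms by (intro sum_mono) (auto simp: dl_def)
  have low: "exp (- potts_H N \<sigma>0 ?J) \<le> ?Z"
    unfolding partition_Z_def
    by (rule member_le_sum[OF s0]) (auto simp: configs_finite)
  have l1: "ln ?Z \<le> real N * ln (real q)"
    using up Z assms by (subst ln_realpow[symmetric]) auto
  have l2: "- potts_H N \<sigma>0 ?J \<le> ln ?Z"
    using low Z by (subst ln_exp[symmetric]) (rule ln_mono; simp)
  have "ln (real q) \<ge> 0" using assms by simp
  hence "real N * ln (real q) \<ge> 0" by simp
  moreover have "\<beta> * real (\<Sum>p\<in>{1..N}\<times>{1..N}. n p) \<ge> 0" using assms by (simp add: sum_nonneg)
  ultimately show ?thesis unfolding Fz_def using l1 l2 H0 by linarith
qed

lemma potts_H_cong:
  assumes "\<And>i. i \<in> {1..N} \<Longrightarrow> \<sigma> i = \<tau> i" "\<And>p. p \<in> {1..N}\<times>{1..N} \<Longrightarrow> J p = K p"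
  shows "potts_H N \<sigma> J = potts_H N \<tau> K"
  unfolding potts_H_alt using assms by (intro sum.cong) auto

lemma potts_H_split:
  assumes "\<And>i j. i \<in> {1..N1+N2} \<Longrightarrow> j \<in> {1..N1+N2} \<Longrightarrow> (i \<le> N1) \<noteq> (j \<le> N1) \<Longrightarrow> J (i, j) = 0"
  shows "potts_H (N1+N2) \<sigma> J = potts_H N1 \<sigma> J + potts_H N2 (\<lambda>i. \<sigma> (i + N1)) (\<lambda>(i,j). J (i + N1, j + N1))"
proof -
  let ?f = "\<lambda>i j. J (i, j) * (if \<sigma> i = \<sigma> j then 1 else 0)"
  have split: "{1..N1+N2} = {1..N1} \<union> {N1+1..N1+N2}" by auto
  have dis: "{1..N1} \<inter> {N1+1..N1+N2} = {}" by auto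
  have sh: "(\<Sum>i\<in>{N1+1..N1+N2}. g i) = (\<Sum>i\<in>{1..N2}. g (i + N1))" for g :: "nat \<Rightarrow> real"
  proof -
    have eq: "{N1+1..N1+N2} = (\<lambda>i. i + N1) ` {1..N2}" by (auto simp: image_iff intro!: bexI[of _ "_ - N1"])
    have inj: "inj_on (\<lambda>i. i + N1) {1..N2}" by (simp add: inj_on_def)
    show ?thesis unfolding eq sum.reindex[OF inj] o_def ..
  qed
  have "potts_H (N1+N2) \<sigma> J = (\<Sum>i\<in>{1..N1}. (\<Sum>j\<in>{1..N1}. ?f i j) + (\<Sum>j\<in>{N1+1..N1+N2}. ?f i j))
                + (\<Sum>i\<in>{N1+1..N1+N2}. (\<Sum>j\<in>{1..N1}. ?f i j) + (\<Sum>j\<in>{N1+1..N1+N2}. ?f i j))"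
    unfolding potts_H_def split by (simp add: sum.union_disjoint dis)
  also have "\<dots> = (\<Sum>i\<in>{1..N1}. \<Sum>j\<in>{1..N1}. ?f i j) + (\<Sum>i\<in>{N1+1..N1+N2}. \<Sum>j\<in>{N1+1..N1+N2}. ?f i j)"
    using assms by (intro arg_cong2[where f="(+)"] sum.cong refl) (auto intro!: sum.neutral)
  also have "(\<Sum>i\<in>{N1+1..N1+N2}. \<Sum>j\<in>{N1+1..N1+N2}. ?f i j) = (\<Sum>i\<in>{1..N2}. \<Sum>j\<in>{1..N2}. ?f (i+N1) (j+N1))"
    unfolding sh ..
  finally show ?thesis unfolding potts_H_def by simp
qed

lemma configs_split_bij:
  "bij_betw (\<lambda>\<sigma>. (restrict \<sigma> {1..N1}, restrict (\<lambda>i. \<sigma> (i + N1)) {1..N2}))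
     (configs q (N1+N2)) (configs q N1 \<times> configs q N2)"
proof (rule bij_betw_byWitness[where f' = "\<lambda>(a,b) i. if i \<in> {1..N1} then a i else if i \<in> {N1+1..N1+N2} then b (i - N1) else undefined"])
  show "\<forall>a\<in>configs q (N1 + N2).
       (case (restrict a {1..N1}, restrict (\<lambda>i. a (i + N1)) {1..N2}) of
        (a, b) \<Rightarrow> \<lambda>i. if i \<in> {1..N1} then a i else if i \<in> {N1 + 1..N1 + N2} then b (i - N1) else undefined) = a"
    by (auto simp: configs_def fun_eq_iff PiE_def extensional_def)
  show "\<forall>a'\<in>configs q N1 \<times> configs q N2.
       (restrict ((case a' of (a, b) \<Rightarrow> \<lambda>i. if i \<in> {1..N1} then a i else if i \<in> {N1 + 1..N1 + N2} then b (i - N1) else undefined)) {1..N1},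
        restrict (\<lambda>i. (case a' of (a, b) \<Rightarrow> \<lambda>i. if i \<in> {1..N1} then a i else if i \<in> {N1 + 1..N1 + N2} then b (i - N1) else undefined) (i + N1)) {1..N2}) = a'"
    by (auto simp: configs_def fun_eq_iff PiE_def extensional_def)
  show "(\<lambda>\<sigma>. (restrict \<sigma> {1..N1}, restrict (\<lambda>i. \<sigma> (i + N1)) {1..N2})) ` configs q (N1 + N2) \<subseteq> configs q N1 \<times> configs q N2"
    by (auto simp: configs_def)
  show "(\<lambda>(a, b) i. if i \<in> {1..N1} then a i else if i \<in> {N1 + 1..N1 + N2} then b (i - N1) else undefined) ` (configs q N1 \<times> configs q N2) \<subseteq> configs q (N1 + N2)"
  proof
    fix x assume "x \<in> (\<lambda>(a, b) i. if i \<in> {1..N1} then a i else if i \<in> {N1 + 1..N1 + N2} then b (i - N1) else undefined) ` (configs q N1 \<times> configs q N2)"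
    then obtain a b where a: "a \<in> configs q N1" and b: "b \<in> configs q N2"
      and x: "x = (\<lambda>i. if i \<in> {1..N1} then a i else if i \<in> {N1 + 1..N1 + N2} then b (i - N1) else undefined)" by auto
    have bb: "b (i - N1) \<in> {1..q}" if "i \<in> {1..N1+N2}" "\<not> i \<le> N1" for i
    proof -
      have "i - N1 \<in> {1..N2}" using that by auto
      thus ?thesis using b by (auto simp: configs_def PiE_iff)
    qed
    show "x \<in> configs q (N1 + N2)"
      unfolding x configs_def PiE_iff using a bb by (auto simp: configs_def PiE_iff extensional_def)
  qed
qed

lemma Z_split:
  assumes "\<And>i j. i \<in> {1..N1+N2} \<Longrightarrow> j \<in> {1..N1+N2} \<Longrightarrow> (i \<le> N1) \<noteq> (j \<le> N1) \<Longrightarrow> J (i, j) = 0"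
  shows "partition_Z q (N1+N2) J = partition_Z q N1 J * partition_Z q N2 (\<lambda>(i,j). J (i + N1, j + N1))"
proof -
  let ?J2 = "\<lambda>(i,j). J (i + N1, j + N1)"
  let ?h = "\<lambda>x. exp (- potts_H N1 (fst x) J) * exp (- potts_H N2 (snd x) ?J2)"
  have "partition_Z q (N1+N2) J = (\<Sum>\<sigma>\<in>configs q (N1+N2). ?h (restrict \<sigma> {1..N1}, restrict (\<lambda>i. \<sigma> (i + N1)) {1..N2}))"
    unfolding partition_Z_def
  proof (intro sum.cong refl)
    fix \<sigma> assume "\<sigma> \<in> configs q (N1+N2)"
    have "potts_H N1 (restrict \<sigma> {1..N1}) J = potts_H N1 \<sigma> J" by (intro potts_H_cong) auto
    moreover have "potts_H N2 (restrict (\<lambda>i. \<sigma> (i + N1)) {1..N2}) ?J2 = potts_H N2 (\<lambda>i. \<sigma> (i + N1)) ?J2"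
      by (intro potts_H_cong) auto
    ultimately show "exp (- potts_H (N1 + N2) \<sigma> J) = ?h (restrict \<sigma> {1..N1}, restrict (\<lambda>i. \<sigma> (i + N1)) {1..N2})"
      using potts_H_split[of N1 N2 J \<sigma>, OF assms] by (simp add: exp_add[symmetric])
  qed
  also have "\<dots> = (\<Sum>x\<in>configs q N1 \<times> configs q N2. ?h x)"
    by (rule sum.reindex_bij_betw[OF configs_split_bij])
  also have "\<dots> = partition_Z q N1 J * partition_Z q N2 ?J2"
    unfolding partition_Z_def by (simp add: sum_product sum.cartesian_product case_prod_unfold)
  finally show ?thesis .
qed




lemma partition_Z_cong:
  assumes "\<And>p. p \<in> {1..M}\<times>{1..M} \<Longrightarrow> J p = K p"
  shows "partition_Z q M J = partition_Z q M K"
  unfolding partition_Z_def using assms by (intro sum.cong refl arg_cong[where f=exp] arg_cong[where f=uminus] potts_H_cong) auto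

lemma Fz_comb:
  assumes "q \<ge> 1" "\<And>y. y \<notin> {N1+1..N1+N2}\<times>{N1+1..N1+N2} \<Longrightarrow> g2 y = 0"
  shows "Fz q (N1+N2) \<beta> (\<lambda>x. if x \<in> {1..N1}\<times>{1..N1} then g1 x else g2 x)
       = Fz q N1 \<beta> g1 + Fz q N2 \<beta> (g2 \<circ> (\<lambda>(i,j). (i+N1, j+N1)))"
proof -
  let ?c = "\<lambda>x. if x \<in> {1..N1}\<times>{1..N1} then g1 x else g2 x"
  let ?J = "\<lambda>ij. \<beta> * real (?c ij)"
  have "partition_Z q (N1+N2) ?J = partition_Z q N1 ?J * partition_Z q N2 (\<lambda>(i,j). ?J (i + N1, j + N1))"
    by (rule Z_split) (use assms(2) in auto)
  also have "partition_Z q N1 ?J = partition_Z q N1 (\<lambda>ij. \<beta> * real (g1 ij))"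
    by (rule partition_Z_cong) auto
  also have "partition_Z q N2 (\<lambda>(i,j). ?J (i + N1, j + N1))
      = partition_Z q N2 (\<lambda>ij. \<beta> * real ((g2 \<circ> (\<lambda>(i,j). (i+N1, j+N1))) ij))"
    by (rule partition_Z_cong) auto
  finally have Zeq: "partition_Z q (N1+N2) ?J = partition_Z q N1 (\<lambda>ij. \<beta> * real (g1 ij)) *
      partition_Z q N2 (\<lambda>ij. \<beta> * real ((g2 \<circ> (\<lambda>(i,j). (i+N1, j+N1))) ij))" .
  have nz: "partition_Z q M K \<noteq> 0" for M K using Z_pos[OF assms(1), of M K] by simp
  show ?thesis unfolding Fz_def Zeq by (simp add: ln_mult nz)
qed

lemma Fz_integrable_sums:
  assumes "finite P" "\<And>p. p \<in> P \<Longrightarrow> w p \<ge> 0" "q \<ge> 1" "\<beta> \<ge> 0"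
    "P = {1..M}\<times>{1..M}"
  shows "integrable (measure_pmf (Pi_pmf P 0 (\<lambda>p. poisson_mean (w p)))) (Fz q M \<beta>)"
    and "(\<lambda>K. exp (- (\<Sum>p\<in>P. w p)) / fact K * Sw w P K (Fz q M \<beta>) (\<lambda>_. 0))
           sums measure_pmf.expectation (Pi_pmf P 0 (\<lambda>p. poisson_mean (w p))) (Fz q M \<beta>)"
proof -
  have AB: "real M * ln (real q) \<ge> 0" "\<beta> \<ge> 0" using assms by auto
  have b: "\<bar>Fz q M \<beta> n\<bar> \<le> real M * ln (real q) + \<beta> * real (\<Sum>p\<in>P. n p)" for n
    using Fz_bound[OF assms(3,4)] assms(5) by simp
  show "integrable (measure_pmf (Pi_pmf P 0 (\<lambda>p. poisson_mean (w p)))) (Fz q M \<beta>)"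
    by (rule poisson_expect(1)[OF assms(1,2) AB b])
  show "(\<lambda>K. exp (- (\<Sum>p\<in>P. w p)) / fact K * Sw w P K (Fz q M \<beta>) (\<lambda>_. 0))
           sums measure_pmf.expectation (Pi_pmf P 0 (\<lambda>p. poisson_mean (w p))) (Fz q M \<beta>)"
    by (rule poisson_expect(2)[OF assms(1,2) AB b])
qed

lemma J_law_alt: "J_law M c = Pi_pmf ({1..M}\<times>{1..M}) 0 (\<lambda>p. poisson_mean ((\<lambda>_. c / (2 * real M)) p))"
  unfolding J_law_def by simp

lemma pressure_alt: "pressure q M \<beta> c = measure_pmf.expectation (J_law M c) (Fz q M \<beta>) / real M"
  unfolding pressure_def Fz_def by simp

lemma kap_expect:
  assumes q: "q \<ge> 1" and b: "\<beta> \<ge> 0" and c: "c \<ge> 0" and n: "N1 \<ge> 1" "N2 \<ge> 1"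
  shows "measure_pmf.expectation (Pi_pmf ({1..N1+N2}\<times>{1..N1+N2}) 0 (\<lambda>p. poisson_mean (kapw N1 N2 c p))) (Fz q (N1+N2) \<beta>)
       = measure_pmf.expectation (J_law N1 c) (Fz q N1 \<beta>) + measure_pmf.expectation (J_law N2 c) (Fz q N2 \<beta>)"
proof -
  define P where "P = {1..N1+N2}\<times>{1..N1+N2}"
  define Q1 where "Q1 = {1..N1}\<times>{1..N1}"
  define Q2 where "Q2 = {N1+1..N1+N2}\<times>{N1+1..N1+N2}"
  define Q0 where "Q0 = {1..N2}\<times>{1..N2}"
  define h where "h = (\<lambda>(i::nat,j::nat). (i+N1, j+N1))"
  define kp where "kp = (\<lambda>p. poisson_mean (kapw N1 N2 c p))"
  define D1 where "D1 = Pi_pmf Q1 0 kp"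
  define D2 where "D2 = Pi_pmf Q2 0 kp"
  define comb where "comb = (\<lambda>(f::nat\<times>nat\<Rightarrow>nat, g::nat\<times>nat\<Rightarrow>nat) x. if x \<in> Q1 then f x else g x)"
  have fin: "finite P" "finite Q1" "finite Q2" "finite Q0" by (auto simp: P_def Q1_def Q2_def Q0_def)
  have s1: "Pi_pmf P 0 kp = Pi_pmf (Q1 \<union> Q2) 0 kp"
    by (rule Pi_pmf_subset') (auto simp: P_def Q1_def Q2_def kp_def kapw_def poisson_mean_def)
  have s2: "Pi_pmf (Q1 \<union> Q2) 0 kp = map_pmf comb (pair_pmf D1 D2)"
    unfolding D1_def D2_def comb_def
    by (rule Pi_pmf_union) (auto simp: fin Q1_def Q2_def)
  have s3: "D1 = J_law N1 c"
    unfolding D1_def J_law_def Q1_def kp_def by (intro Pi_pmf_cong) (auto simp: kapw_def)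
  have s4: "D2 = Pi_pmf Q2 0 (\<lambda>_. poisson_mean (c / (2 * real N2)))"
    unfolding D2_def kp_def by (intro Pi_pmf_cong) (auto simp: kapw_def Q2_def)
  have bij: "bij_betw h Q0 Q2"
  proof (rule bij_betw_byWitness[where f' = "\<lambda>(i,j). (i - N1, j - N1)"])
  qed (auto simp: h_def Q0_def Q2_def image_iff intro!: bexI[of _ "(_ - N1, _ - N1)"])
  have s5: "J_law N2 c = map_pmf (\<lambda>g. g \<circ> h) D2"
    unfolding s4 J_law_def Q0_def[symmetric]
    by (rule Pi_pmf_bij_betw[OF fin(4) bij]) (auto simp: h_def Q0_def Q2_def)
  have int1: "integrable (measure_pmf D1) (Fz q N1 \<beta>)"
    unfolding s3 J_law_alt by (rule Fz_integrable_sums(1)) (use q b c in auto)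
  have int2': "integrable (measure_pmf (J_law N2 c)) (Fz q N2 \<beta>)"
    unfolding J_law_alt by (rule Fz_integrable_sums(1)) (use q b c in auto)
  have int2: "integrable (measure_pmf D2) (\<lambda>g. Fz q N2 \<beta> (g \<circ> h))"
    using int2' unfolding s5 by simp
  have intp1: "integrable (measure_pmf (pair_pmf D1 D2)) (\<lambda>x. Fz q N1 \<beta> (fst x))"
    using int1 integrable_map_pmf_eq[of fst "pair_pmf D1 D2" "Fz q N1 \<beta>"] by (simp add: map_fst_pair_pmf)
  have intp2: "integrable (measure_pmf (pair_pmf D1 D2)) (\<lambda>x. Fz q N2 \<beta> (snd x \<circ> h))"
    using int2 integrable_map_pmf_eq[of snd "pair_pmf D1 D2" "\<lambda>g. Fz q N2 \<beta> (g \<circ> h)"] by (simp add: map_snd_pair_pmf)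
  have supp: "\<forall>x\<in>set_pmf (pair_pmf D1 D2). Fz q (N1+N2) \<beta> (comb x) = Fz q N1 \<beta> (fst x) + Fz q N2 \<beta> (snd x \<circ> h)"
  proof
    fix x assume "x \<in> set_pmf (pair_pmf D1 D2)"
    hence "snd x \<in> set_pmf D2" by auto
    hence z: "\<And>y. y \<notin> Q2 \<Longrightarrow> snd x y = 0" using set_Pi_pmf_subset[OF fin(3), of 0 kp] unfolding D2_def by blast
    show "Fz q (N1+N2) \<beta> (comb x) = Fz q N1 \<beta> (fst x) + Fz q N2 \<beta> (snd x \<circ> h)"
      using Fz_comb[OF q, of N1 N2 "snd x" \<beta> "fst x"] z
      unfolding comb_def h_def Q1_def Q2_def by (simp add: case_prod_unfold)
  qed
  have "measure_pmf.expectation (Pi_pmf P 0 kp) (Fz q (N1+N2) \<beta>)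
      = measure_pmf.expectation (pair_pmf D1 D2) (\<lambda>x. Fz q (N1+N2) \<beta> (comb x))"
    unfolding s1 s2 by simp
  also have "\<dots> = measure_pmf.expectation (pair_pmf D1 D2) (\<lambda>x. Fz q N1 \<beta> (fst x) + Fz q N2 \<beta> (snd x \<circ> h))"
    using supp by (intro integral_cong_AE) (auto simp: AE_measure_pmf_iff)
  also have "\<dots> = measure_pmf.expectation (pair_pmf D1 D2) (\<lambda>x. Fz q N1 \<beta> (fst x))
       + measure_pmf.expectation (pair_pmf D1 D2) (\<lambda>x. Fz q N2 \<beta> (snd x \<circ> h))"
    by (rule Bochner_Integration.integral_add[OF intp1 intp2])
  also have "\<dots> = measure_pmf.expectation D1 (Fz q N1 \<beta>) + measure_pmf.expectation D2 (\<lambda>g. Fz q N2 \<beta> (g \<circ> h))"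
    using expectation_pair_pmf_fst[of D1 D2 "Fz q N1 \<beta>"] expectation_pair_pmf_snd[of D1 D2 "\<lambda>g. Fz q N2 \<beta> (g \<circ> h)"]
    by simp
  also have "\<dots> = measure_pmf.expectation (J_law N1 c) (Fz q N1 \<beta>) + measure_pmf.expectation (J_law N2 c) (Fz q N2 \<beta>)"
    unfolding s3 s5 by simp
  finally show ?thesis unfolding P_def kp_def .
qed

theorem mainTheorem3:
  fixes q N1 N2 :: nat and \<beta> c :: real
  assumes "q \<ge> 2" and "\<beta> \<ge> 0" and "c \<ge> 0" and "N1 \<ge> 1" and "N2 \<ge> 1"
  shows "pressure q (N1 + N2) \<beta> c \<ge>
           real N1 / real (N1 + N2) * pressure q N1 \<beta> c
         + real N2 / real (N1 + N2) * pressure q N2 \<beta> c"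
proof -
  have q: "q \<ge> 1" using assms(1) by simp
  define P where "P = {1..N1+N2}\<times>{1..N1+N2}"
  let ?F = "Fz q (N1+N2) \<beta>"
  let ?Dl = "Pi_pmf P 0 (\<lambda>p. poisson_mean (lamw N1 N2 c p))"
  let ?Dk = "Pi_pmf P 0 (\<lambda>p. poisson_mean (kapw N1 N2 c p))"
  have finP: "finite P" by (simp add: P_def)
  have lam0: "lamw N1 N2 c p \<ge> 0" for p using assms(3) by (simp add: lamw_def)
  have kap0: "kapw N1 N2 c p \<ge> 0" for p using assms(3) by (simp add: kapw_def)
  have Jl: "J_law (N1+N2) c = ?Dl" unfolding J_law_def lamw_def P_def ..
  have W: "(\<Sum>p\<in>P. kapw N1 N2 c p) = (\<Sum>p\<in>P. lamw N1 N2 c p)"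
    unfolding P_def by (rule sum_kap) (use assms in auto)
  have Sl: "(\<lambda>K. exp (- (\<Sum>p\<in>P. lamw N1 N2 c p)) / fact K * Sw (lamw N1 N2 c) P K ?F (\<lambda>_. 0))
      sums measure_pmf.expectation ?Dl ?F"
    by (rule Fz_integrable_sums(2)[OF finP lam0 q assms(2)]) (simp add: P_def)
  have Sk: "(\<lambda>K. exp (- (\<Sum>p\<in>P. lamw N1 N2 c p)) / fact K * Sw (kapw N1 N2 c) P K ?F (\<lambda>_. 0))
      sums measure_pmf.expectation ?Dk ?F"
    unfolding W[symmetric] by (rule Fz_integrable_sums(2)[OF finP kap0 q assms(2)]) (simp add: P_def)
  have trm: "exp (- (\<Sum>p\<in>P. lamw N1 N2 c p)) / fact K * Sw (kapw N1 N2 c) P K ?F (\<lambda>_. 0)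
      \<le> exp (- (\<Sum>p\<in>P. lamw N1 N2 c p)) / fact K * Sw (lamw N1 N2 c) P K ?F (\<lambda>_. 0)" for K
  proof (rule mult_left_mono)
    show "Sw (kapw N1 N2 c) P K ?F (\<lambda>_. 0) \<le> Sw (lamw N1 N2 c) P K ?F (\<lambda>_. 0)"
      by (rule Sw_hybrid) (use edge_ineq[OF q assms(2,4,5,3)] kap0 lam0 in \<open>auto simp: P_def\<close>)
  qed simp
  have le: "measure_pmf.expectation ?Dk ?F \<le> measure_pmf.expectation ?Dl ?F"
    by (rule sums_le[OF trm Sk Sl])
  have split: "measure_pmf.expectation ?Dk ?F
      = measure_pmf.expectation (J_law N1 c) (Fz q N1 \<beta>) + measure_pmf.expectation (J_law N2 c) (Fz q N2 \<beta>)"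
    unfolding P_def by (rule kap_expect[OF q assms(2,3,4,5)])
  have n1: "real N1 > 0" "real N2 > 0" using assms by auto
  have "real N1 / real (N1 + N2) * pressure q N1 \<beta> c + real N2 / real (N1 + N2) * pressure q N2 \<beta> c
      = (measure_pmf.expectation (J_law N1 c) (Fz q N1 \<beta>) + measure_pmf.expectation (J_law N2 c) (Fz q N2 \<beta>)) / real (N1 + N2)"
  proof -
    have g: "x / y * (e / x) = e / y" if "x > 0" "y > 0" for x y e :: real using that by (simp add: field_simps)
    show ?thesis unfolding pressure_alt add_divide_distrib using n1 by (simp add: g)
  qed
  also have "\<dots> \<le> measure_pmf.expectation ?Dl ?F / real (N1 + N2)"
    using le split n1 by (intro divide_right_mono) auto
  also have "\<dots> = pressure q (N1 + N2) \<beta> c"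
    unfolding pressure_alt Jl ..
  finally show ?thesis .
qed


end
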